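(* In the bipartite setting, for all $\alpha,\gamma\in\Phi_{\ge-1}$ we have $\tau_t(t_-\alpha)=t_-\tau_-\tau_+(\alpha)$ and $(\alpha||\gamma)_{\ge-1}=(t_-\alpha||t_-\gamma)_t$.
   Context: $I$ is a connected finite type Dynkin diagram with root system $\Phi$, positive roots $\Phi_+$, simple roots $\alpha_i$, Weyl group with simple reflections $s_i$. Let $I=I_+\sqcup I_-$ be the bipartition of $I$ (every edge joins $I_+$ and $I_-$), $t_\pm:=\prod_{i\in I_\pm}s_i$, $t:=t_+t_-$. $[\gamma;\alpha_i]$ is the coefficient of $\alpha_i$ in $\gamma$ in the simple root basis, $[x]_+=\max\{x,0\}$. $\Phi_{\ge-1}:=\Phi_+\cup\{-\alpha_i\}_{i\in I}$; for $\varepsilon\in\{+,-\}$ the involution $\tau_\varepsilon$ of $\Phi_{\ge-1}$ is $\tau_\varepsilon(-\alpha_i)=-\alpha_i$ if $i\in I_{-\varepsilon}$ and $\tau_\varepsilon(\alpha)=t_\varepsilon\alpha$ otherwise. $(\bullet||\bullet)_{\ge-1}$ is the unique function on $\Phi_{\ge-1}^2$ invariant under $\tau_+$ and $\tau_-$ with $(-\alpha_i||\gamma)_{\ge-1}=[\gamma;\alpha_i]_+$. For a Coxeter element $c=s_{i_1}\cdots s_{i_n}$ put $\beta^c_{i_k}:=s_{i_n}\cdots s_{i_{k+1}}\alpha_{i_k}$, $\Phi_{\mathrm{ap}}(c):=\Phi_+\cup\{-\beta^c_i\}_{i\in I}$; $\tau_c$ on $\Phi_{\mathrm{ap}}(c)$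 is $\tau_c(\beta_i^c)=-\beta_i^c$, $\tau_c(\alpha)=c\alpha$ otherwise; $(\bullet||\bullet)_c$ is the unique $\tau_c$-invariant function on $\Phi_{\mathrm{ap}}(c)^2$ with $(-\beta_i^c||\alpha)_c=[\alpha;\alpha_i]_+$. The linear map $t_-$ maps $\Phi_{\ge-1}$ bijectively onto $\Phi_{\mathrm{ap}}(t)$. *)

theory Defs
  imports Complex_Main
begin

(* Root lattice vectors: coordinates in the basis of simple roots, indexed by the
   vertex set I = UNIV of a finite type 'i. Cartan matrix convention:
   s_i(alpha_j) = alpha_j - A i j * alpha_i. *)

type_synonym 'i vec = "'i \<Rightarrow> int"

definition simple :: "'i \<Rightarrow> 'i vec" where
  "simple i = (\<lambda>j. if j = i then 1 else 0)"

definition neg :: "'i vec \<Rightarrow> 'i vec" where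
  "neg v = (\<lambda>j. - v j)"

definition srefl :: "('i::finite \<Rightarrow> 'i \<Rightarrow> int) \<Rightarrow> 'i \<Rightarrow> 'i vec \<Rightarrow> 'i vec" where
  "srefl A i v = (\<lambda>j. if j = i then v i - (\<Sum>k\<in>UNIV. A i k * v k) else v j)"

fun refl_word :: "('i::finite \<Rightarrow> 'i \<Rightarrow> int) \<Rightarrow> 'i list \<Rightarrow> 'i vec \<Rightarrow> 'i vec" where
  "refl_word A [] = id"
| "refl_word A (i # w) = srefl A i \<circ> refl_word A w"

definition finite_type_cartan :: "('i::finite \<Rightarrow> 'i \<Rightarrow> int) \<Rightarrow> bool" where
  "finite_type_cartan A \<longleftrightarrow>
     (\<forall>i. A i i = 2) \<and> (\<forall>i j. i \<noteq> j \<longrightarrow> A i j \<le> 0) \<and> (\<forall>i j. A i j = 0 \<longleftrightarrow> A j i = 0) \<and>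
     (\<exists>d :: 'i \<Rightarrow> real. (\<forall>i. d i > 0) \<and> (\<forall>i j. d i * of_int (A i j) = d j * of_int (A j i)) \<and>
        (\<forall>x :: 'i \<Rightarrow> real. (\<exists>i. x i \<noteq> 0) \<longrightarrow>
            (\<Sum>i\<in>UNIV. \<Sum>j\<in>UNIV. x i * d i * of_int (A i j) * x j) > 0))"

definition dynkin_edges :: "('i \<Rightarrow> 'i \<Rightarrow> int) \<Rightarrow> ('i \<times> 'i) set" where
  "dynkin_edges A = {(i, j). i \<noteq> j \<and> A i j \<noteq> 0}"

definition connected_diagram :: "('i \<Rightarrow> 'i \<Rightarrow> int) \<Rightarrow> bool" where
  "connected_diagram A \<longleftrightarrow> (\<forall>i j. (i, j) \<in> (dynkin_edges A)\<^sup>*)"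

definition is_bipartition :: "('i \<Rightarrow> 'i \<Rightarrow> int) \<Rightarrow> 'i set \<Rightarrow> 'i set \<Rightarrow> bool" where
  "is_bipartition A Ipl Imi \<longleftrightarrow> Ipl \<inter> Imi = {} \<and> Ipl \<union> Imi = UNIV \<and>
     (\<forall>i j. (i, j) \<in> dynkin_edges A \<longrightarrow> (i \<in> Ipl \<longleftrightarrow> j \<in> Imi))"

inductive_set roots :: "('i::finite \<Rightarrow> 'i \<Rightarrow> int) \<Rightarrow> 'i vec set" for A where
  simple_root: "simple i \<in> roots A"
| refl_root: "v \<in> roots A \<Longrightarrow> srefl A i v \<in> roots A"

definition pos_roots :: "('i::finite \<Rightarrow> 'i \<Rightarrow> int) \<Rightarrow> 'i vec set" where
  "pos_roots A = {v \<in> roots A. \<forall>j. v j \<ge> 0}"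

definition almost_pos :: "('i::finite \<Rightarrow> 'i \<Rightarrow> int) \<Rightarrow> 'i vec set" where
  "almost_pos A = pos_roots A \<union> range (\<lambda>i. neg (simple i))"

(* tau_eps: Ie = I_eps enumerated by the list we (so refl_word A we = t_eps),
   Io = I_{-eps} *)
definition tau_bip :: "('i::finite \<Rightarrow> 'i \<Rightarrow> int) \<Rightarrow> 'i set \<Rightarrow> 'i list \<Rightarrow> 'i vec \<Rightarrow> 'i vec" where
  "tau_bip A Io we v = (if \<exists>i\<in>Io. v = neg (simple i) then v else refl_word A we v)"

(* beta^c_{i_k} = s_{i_n} ... s_{i_{k+1}} alpha_{i_k} for c = s_{i_1} ... s_{i_n} *)
fun beta :: "('i::finite \<Rightarrow> 'i \<Rightarrow> int) \<Rightarrow> 'i list \<Rightarrow> 'i \<Rightarrow> 'i vec" where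
  "beta A [] i = simple i"
| "beta A (j # w) i = (if j = i then refl_word A (rev w) (simple i) else beta A w i)"

definition ap_roots :: "('i::finite \<Rightarrow> 'i \<Rightarrow> int) \<Rightarrow> 'i list \<Rightarrow> 'i vec set" where
  "ap_roots A w = pos_roots A \<union> range (\<lambda>i. neg (beta A w i))"

definition tau_c :: "('i::finite \<Rightarrow> 'i \<Rightarrow> int) \<Rightarrow> 'i list \<Rightarrow> 'i vec \<Rightarrow> 'i vec" where
  "tau_c A w v = (if \<exists>i. v = beta A w i then neg v else refl_word A w v)"

(* f satisfies the characterization of ( || )_{>= -1} *)
definition is_compat_ge ::
  "('i::finite \<Rightarrow> 'i \<Rightarrow> int) \<Rightarrow> 'i set \<Rightarrow> 'i set \<Rightarrow> 'i list \<Rightarrow> 'i list \<Rightarrow> ('i vec \<Rightarrow> 'i vec \<Rightarrow> int) \<Rightarrow> bool" where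
  "is_compat_ge A Ipl Imi wp wm f \<longleftrightarrow>
     (\<forall>a\<in>almost_pos A. \<forall>g\<in>almost_pos A.
        f (tau_bip A Imi wp a) (tau_bip A Imi wp g) = f a g \<and>
        f (tau_bip A Ipl wm a) (tau_bip A Ipl wm g) = f a g) \<and>
     (\<forall>i. \<forall>g\<in>almost_pos A. f (neg (simple i)) g = max (g i) 0)"

(* g satisfies the characterization of ( || )_c, c given by the word w *)
definition is_compat_c ::
  "('i::finite \<Rightarrow> 'i \<Rightarrow> int) \<Rightarrow> 'i list \<Rightarrow> ('i vec \<Rightarrow> 'i vec \<Rightarrow> int) \<Rightarrow> bool" where
  "is_compat_c A w f \<longleftrightarrow>
     (\<forall>a\<in>ap_roots A w. \<forall>g\<in>ap_roots A w. f (tau_c A w a) (tau_c A w g) = f a g) \<and>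
     (\<forall>i. \<forall>a\<in>ap_roots A w. f (neg (beta A w i)) a = max (a i) 0)"

end

theory Submission
  imports Defs "HOL-Analysis.Analysis"
begin


lemma sum_upd_aux:
  fixes f :: "'i::finite \<Rightarrow> int"
  shows "(\<Sum>l\<in>UNIV. f l * (if l = i then x else v l)) = (\<Sum>l\<in>UNIV. f l * v l) + f i * (x - v i)"
proof -
  have "(\<Sum>l\<in>UNIV. f l * (if l = i then x else v l)) = f i * x + (\<Sum>l\<in>UNIV-{i}. f l * v l)"
    by (subst sum.remove[of UNIV i], auto intro!: sum.cong)
  moreover have "(\<Sum>l\<in>UNIV. f l * v l) = f i * v i + (\<Sum>l\<in>UNIV-{i}. f l * v l)"
    by (subst sum.remove[of UNIV i], auto)
  ultimately show ?thesis by (simp add: algebra_simps)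
qed

lemma refl_word_append: "refl_word A (u @ w) = refl_word A u \<circ> refl_word A w"
  by (induction u) auto

lemma srefl_inv:
  assumes "A i i = 2"
  shows "srefl A i (srefl A i v) = v"
proof
  fix k
  show "srefl A i (srefl A i v) k = v k"
  proof (cases "k = i")
    case True
    have "srefl A i v = (\<lambda>j. if j = i then v i - (\<Sum>k\<in>UNIV. A i k * v k) else v j)"
      by (simp add: srefl_def)
    then show ?thesis using True assms by (simp add: srefl_def sum_upd_aux)
  qed (simp add: srefl_def)
qed


lemma srefl_lin: "srefl A i (\<lambda>k. p * u k + q * v k) = (\<lambda>k. p * srefl A i u k + q * srefl A i v k)"
  by (rule ext) (simp add: srefl_def sum.distrib sum_distrib_left algebra_simps)

lemma rw_lin: "refl_word A w (\<lambda>k. p * u k + q * v k) = (\<lambda>k. p * refl_word A w u k + q * refl_word A w v k)"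
  by (induction w) (auto simp: srefl_lin)

lemma srefl_neg: "srefl A i (neg v) = neg (srefl A i v)"
  by (rule ext) (simp add: srefl_def neg_def sum_negf)

lemma rw_neg: "refl_word A w (neg v) = neg (refl_word A w v)"
  by (induction w) (auto simp: srefl_neg)

lemma rw_rev_inv:
  assumes "\<forall>i. A i i = 2"
  shows "refl_word A (rev w) (refl_word A w v) = v"
  using assms by (induction w arbitrary: v) (auto simp: refl_word_append srefl_inv)

lemma rw_rev_inv2:
  assumes "\<forall>i. A i i = 2"
  shows "refl_word A w (refl_word A (rev w) v) = v"
  using rw_rev_inv[where A=A and w="rev w", OF assms] by simp

lemma rw_inj:
  assumes "\<forall>i. A i i = 2" "refl_word A w u = refl_word A w v"
  shows "u = v"
  using rw_rev_inv[where A=A and w=w, OF assms(1)] assms(2) by metis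

lemma roots_word: "v \<in> roots A \<Longrightarrow> \<exists>w i. v = refl_word A w (simple i)"
proof (induction rule: roots.induct)
  case (simple_root i)
  then show ?case by (intro exI[of _ "[]"]) auto
next
  case (refl_root v i)
  then obtain w j where "v = refl_word A w (simple j)" by auto
  then show ?case by (intro exI[of _ "i # w"] exI[of _ j]) auto
qed

lemma word_roots: "refl_word A w (simple i) \<in> roots A"
  by (induction w) (auto intro: roots.intros)

lemma rw_roots: "v \<in> roots A \<Longrightarrow> refl_word A w v \<in> roots A"
  by (induction w) (auto intro: roots.intros)

lemma simple_ne0: "simple i \<noteq> (\<lambda>k. 0)"
  by (metis simple_def zero_neq_one)

lemma rw_zero: "refl_word A w (\<lambda>k. 0) = (\<lambda>k. 0)"
  by (induction w) (auto simp: srefl_def)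

lemma roots_ne0:
  assumes "\<forall>i. A i i = 2" "v \<in> roots A"
  shows "v \<noteq> (\<lambda>k. 0)"
proof
  assume v0: "v = (\<lambda>k. 0)"
  obtain w i where v: "v = refl_word A w (simple i)" using roots_word[OF assms(2)] by auto
  have "refl_word A w (simple i) = refl_word A w (\<lambda>k. 0)" using v v0 rw_zero[of A w] by metis
  then have "simple i = (\<lambda>k. 0)" using rw_inj[where A=A, OF assms(1)] by blast
  then show False using simple_ne0[of i] by simp
qed

lemma rw_set:
  assumes "distinct w" "\<forall>i\<in>set w. \<forall>j\<in>set w. i \<noteq> j \<longrightarrow> A i j = 0"
  shows "refl_word A w v = (\<lambda>k. if k \<in> set w then v k - (\<Sum>l\<in>UNIV. A k l * v l) else v k)"
  using assms
proof (induction w)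
  case Nil
  then show ?case by auto
next
  case (Cons i w)
  let ?u = "refl_word A w v"
  have IH: "?u = (\<lambda>k. if k \<in> set w then v k - (\<Sum>l\<in>UNIV. A k l * v l) else v k)"
    using Cons by auto
  have s: "(\<Sum>l\<in>UNIV. A i l * ?u l) = (\<Sum>l\<in>UNIV. A i l * v l)"
  proof (rule sum.cong)
    fix l
    show "A i l * ?u l = A i l * v l"
      using Cons.prems IH by (cases "l \<in> set w") auto
  qed simp
  have ui: "?u i = v i" using IH Cons.prems by auto
  show ?case
    apply (rule ext)
    unfolding refl_word.simps comp_def srefl_def
    apply (simp only: s ui)
    using Cons.prems by (simp add: IH)
qed


lemma sum2:
  fixes f :: "'i::finite \<Rightarrow> 'a::comm_monoid_add"
  assumes "j \<noteq> s" "\<And>l. l \<noteq> j \<Longrightarrow> l \<noteq> s \<Longrightarrow> f l = 0"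
  shows "(\<Sum>l\<in>UNIV. f l) = f j + f s"
proof -
  have "(\<Sum>l\<in>{j,s}. f l) = (\<Sum>l\<in>UNIV. f l)"
    by (rule sum.mono_neutral_left) (use assms in auto)
  then show ?thesis using assms by simp
qed

locale cartan =
  fixes A :: "'i::finite \<Rightarrow> 'i \<Rightarrow> int"
  assumes fc: "finite_type_cartan A"
begin

lemma diag[simp]: "A i i = 2"
  using fc unfolding finite_type_cartan_def by auto

lemma offdiag: "i \<noteq> j \<Longrightarrow> A i j \<le> 0"
  using fc unfolding finite_type_cartan_def by auto

lemma zero_sym: "A i j = 0 \<longleftrightarrow> A j i = 0"
  using fc unfolding finite_type_cartan_def by auto

lemma diag_all: "\<forall>i. A i i = 2" by simp

definition dd :: "'i \<Rightarrow> real" where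
  "dd = (SOME d. (\<forall>i. d i > 0) \<and> (\<forall>i j. d i * of_int (A i j) = d j * of_int (A j i)) \<and>
        (\<forall>x :: 'i \<Rightarrow> real. (\<exists>i. x i \<noteq> 0) \<longrightarrow>
            (\<Sum>i\<in>UNIV. \<Sum>j\<in>UNIV. x i * d i * of_int (A i j) * x j) > 0))"

lemma dd_props: "(\<forall>i. dd i > 0) \<and> (\<forall>i j. dd i * of_int (A i j) = dd j * of_int (A j i)) \<and>
        (\<forall>x :: 'i \<Rightarrow> real. (\<exists>i. x i \<noteq> 0) \<longrightarrow>
            (\<Sum>i\<in>UNIV. \<Sum>j\<in>UNIV. x i * dd i * of_int (A i j) * x j) > 0)"
  using fc unfolding finite_type_cartan_def dd_def by (rule someI_ex[OF conjunct2[OF conjunct2[OF conjunct2]]])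

lemma dd_pos: "dd i > 0" using dd_props by blast
lemma dd_sym: "dd i * of_int (A i j) = dd j * of_int (A j i)" using dd_props by blast
lemma dd_pd: "(\<exists>i. x i \<noteq> 0) \<Longrightarrow> (\<Sum>i\<in>UNIV. \<Sum>j\<in>UNIV. x i * dd i * of_int (A i j) * x j) > 0"
  using dd_props by blast

lemma rank2_bound:
  assumes "j \<noteq> s"
  shows "A j s * A s j \<le> 3"
proof -
  define d where "d = dd"
  have dpos: "\<forall>i. d i > 0" using dd_pos by (simp add: d_def)
  have dsym: "\<forall>i j. d i * of_int (A i j) = d j * of_int (A j i)" using dd_sym by (simp add: d_def)
  have pd: "\<forall>x :: 'i \<Rightarrow> real. (\<exists>i. x i \<noteq> 0) \<longrightarrow>
            (\<Sum>i\<in>UNIV. \<Sum>j\<in>UNIV. x i * d i * of_int (A i j) * x j) > 0" using dd_pd by (simp add: d_def)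
  define a where "a = - real_of_int (A j s)"
  define b where "b = - real_of_int (A s j)"
  define x :: "'i \<Rightarrow> real" where "x = (\<lambda>i. if i = j then 2 * d s else if i = s then d j * a else 0)"
  have "x j \<noteq> 0" using dpos[rule_format, of s] by (simp add: x_def)
  then have pos: "(\<Sum>i\<in>UNIV. \<Sum>k\<in>UNIV. x i * d i * of_int (A i k) * x k) > 0" using pd by blast
  have inner: "(\<Sum>k\<in>UNIV. x i * d i * of_int (A i k) * x k) = x i * d i * of_int (A i j) * x j + x i * d i * of_int (A i s) * x s" for i
    by (rule sum2) (use assms in \<open>auto simp: x_def\<close>)
  have "(\<Sum>i\<in>UNIV. \<Sum>k\<in>UNIV. x i * d i * of_int (A i k) * x k) =
     (x j * d j * of_int (A j j) * x j + x j * d j * of_int (A j s) * x s) +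
     (x s * d s * of_int (A s j) * x j + x s * d s * of_int (A s s) * x s)"
    unfolding inner by (rule sum2) (use assms in \<open>auto simp: x_def\<close>)
  also have "\<dots> = 2 * d j * d s * (4 * d s - d j * a * a)"
    using assms dsym[rule_format, of j s] by (simp add: x_def a_def b_def algebra_simps)
  finally have eqQ: "(\<Sum>i\<in>UNIV. \<Sum>k\<in>UNIV. x i * d i * of_int (A i k) * x k) = 2 * d j * d s * (4 * d s - d j * a * a)" .
  have "4 * d s - d j * a * a > 0"
  proof -
    have p: "d j * d s > 0" using dpos by simp
    have "2 * d j * d s * (4 * d s - d j * a * a) > 0" using eqQ pos by simp
    then have "(d j * d s) * (4 * d s - d j * a * a) > 0" by (simp add: algebra_simps)
    then show ?thesis using p by (simp add: zero_less_mult_iff)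
  qed
  moreover have "d j * a = d s * b" using dsym[rule_format, of j s] by (simp add: a_def b_def)
  ultimately have "d s * (4 - a * b) > 0" by (simp add: algebra_simps)
  then have "a * b < 4" using dpos[rule_format, of s] by (simp add: zero_less_mult_iff)
  then have "real_of_int (A j s * A s j) < 4" by (simp add: a_def b_def)
  then show ?thesis by linarith
qed

end


fun altF :: "'a \<Rightarrow> 'a \<Rightarrow> nat \<Rightarrow> 'a list" where
  "altF x y 0 = []"
| "altF x y (Suc k) = x # altF y x k"

fun alt_ok :: "'a list \<Rightarrow> bool" where
  "alt_ok (x # y # w) = (x \<noteq> y \<and> alt_ok (y # w))"
| "alt_ok _ = True"

lemma altF_length[simp]: "length (altF x y k) = k"
  by (induction k arbitrary: x y) auto

lemma altF_set: "set (altF x y k) \<subseteq> {x, y}"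
  by (induction k arbitrary: x y) auto

lemma altF_last: "last (altF x y (Suc k)) = (if even k then x else y)"
  by (induction k arbitrary: x y) auto

lemma altF_split: "\<exists>rest. altF x y (k + r) = altF x y k @ rest \<and> set rest \<subseteq> {x, y}"
proof (induction k arbitrary: x y)
  case 0
  then show ?case using altF_set[of x y r] by auto
next
  case (Suc k)
  then obtain rest where "altF y x (k + r) = altF y x k @ rest \<and> set rest \<subseteq> {y, x}" by blast
  then show ?case by (intro exI[of _ rest]) auto
qed

lemma not_alt_ok: "\<not> alt_ok w \<Longrightarrow> \<exists>p z q. w = p @ z # z # q"
proof (induction w rule: alt_ok.induct)
  case (1 x y w)
  show ?case
  proof (cases "x = y")
    case True
    then show ?thesis by (intro exI[of _ "[]"]) auto
  next
    case False
    then have "\<not> alt_ok (y # w)" using 1 by simp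
    then obtain p z q where "y # w = p @ z # z # q" using 1 False by blast
    then show ?thesis by (intro exI[of _ "x # p"]) auto
  qed
qed auto

lemma alt_ok_altF:
  "alt_ok w \<Longrightarrow> set w \<subseteq> {x, y} \<Longrightarrow> x \<noteq> y \<Longrightarrow> w \<noteq> [] \<Longrightarrow> hd w = x \<Longrightarrow> w = altF x y (length w)"
proof (induction w arbitrary: x y)
  case Nil
  then show ?case by simp
next
  case (Cons z w)
  show ?case
  proof (cases w)
    case Nil
    then show ?thesis using Cons by simp
  next
    case (Cons z' w')
    have "alt_ok w" using Cons.prems \<open>w = z' # w'\<close> by simp
    moreover have "hd w = y" using Cons.prems \<open>w = z' # w'\<close> by auto
    ultimately have "w = altF y x (length w)" using Cons.IH[of y x] Cons.prems \<open>w = z' # w'\<close> by auto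
    then show ?thesis using Cons.prems by (simp add: \<open>w = z' # w'\<close>)
  qed
qed

context cartan
begin

lemma rw_cancel: "refl_word A (p @ z # z # q) = refl_word A (p @ q)"
  by (rule ext) (simp add: refl_word_append srefl_inv)

lemma rw_snoc_cancel: "refl_word A (w @ [j]) \<circ> srefl A j = refl_word A w"
  by (rule ext) (simp add: refl_word_append srefl_inv)

definition vec2 :: "'i \<Rightarrow> 'i \<Rightarrow> int \<Rightarrow> int \<Rightarrow> ('i \<Rightarrow> int)" where
  "vec2 j s p q = (\<lambda>k. p * simple j k + q * simple s k)"

lemma sum_simple: fixes f :: "'i \<Rightarrow> int" shows "(\<Sum>l\<in>UNIV. f l * simple j l) = f j"
proof -
  have "(\<Sum>l\<in>UNIV. f l * simple j l) = (\<Sum>l\<in>UNIV. if l = j then f l else 0)"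
    by (rule sum.cong) (auto simp: simple_def)
  then show ?thesis using sum.delta[of UNIV j f] by simp
qed

lemma srefl_vec2_1:
  assumes "j \<noteq> s"
  shows "srefl A j (vec2 j s p q) = vec2 j s (- p - A j s * q) q"
proof -
  have "(\<Sum>l\<in>UNIV. A j l * vec2 j s p q l) = p * 2 + q * A j s"
  proof -
    have "(\<Sum>l\<in>UNIV. A j l * vec2 j s p q l) = (\<Sum>l\<in>UNIV. p * (A j l * simple j l) + q * (A j l * simple s l))"
      by (rule sum.cong) (auto simp: vec2_def algebra_simps)
    also have "\<dots> = p * (\<Sum>l\<in>UNIV. A j l * simple j l) + q * (\<Sum>l\<in>UNIV. A j l * simple s l)"
      by (simp add: sum.distrib sum_distrib_left)
    finally show ?thesis by (simp only: sum_simple diag)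
  qed
  then show ?thesis using assms by (intro ext) (auto simp: srefl_def vec2_def simple_def)
qed

end


context cartan
begin

lemma vec2_swap: "vec2 j s p q = vec2 s j q p"
  by (rule ext) (simp add: vec2_def)

lemma srefl_vec2_2:
  assumes "j \<noteq> s"
  shows "srefl A s (vec2 j s p q) = vec2 j s p (- q - A s j * p)"
  using srefl_vec2_1[of s j q p] assms by (simp add: vec2_swap)

lemma pairs:
  assumes "j \<noteq> s"
  shows "(A j s = 0 \<and> A s j = 0) \<or> (A j s = -1 \<and> A s j = -1) \<or> (A j s = -1 \<and> A s j = -2) \<or>
     (A j s = -2 \<and> A s j = -1) \<or> (A j s = -1 \<and> A s j = -3) \<or> (A j s = -3 \<and> A s j = -1)"
proof -
  define a where "a = - A j s"
  define b where "b = - A s j"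
  have a0: "a \<ge> 0" "b \<ge> 0" using offdiag[of j s] offdiag[of s j] assms by (auto simp: a_def b_def)
  have z: "a = 0 \<longleftrightarrow> b = 0" using zero_sym[of j s] by (auto simp: a_def b_def)
  have p: "a * b \<le> 3" using rank2_bound[OF assms] by (simp add: a_def b_def)
  have "(a = 0 \<and> b = 0) \<or> (a = 1 \<and> b = 1) \<or> (a = 1 \<and> b = 2) \<or> (a = 2 \<and> b = 1) \<or> (a = 1 \<and> b = 3) \<or> (a = 3 \<and> b = 1)"
  proof (cases "a = 0")
    case True then show ?thesis using z by auto
  next
    case False
    then have a1: "a \<ge> 1" "b \<ge> 1" using a0 z by auto
    have "a \<le> 3" using p a1 by (smt (verit) mult_le_cancel_left1)
    moreover have "b \<le> 3" using p a1 by (smt (verit) mult_le_cancel_right1)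
    ultimately have "a \<in> {1,2,3}" "b \<in> {1,2,3}" using a1 by auto
    then show ?thesis using p by auto
  qed
  then show ?thesis by (auto simp: a_def b_def)
qed

definition mcox :: "'i \<Rightarrow> 'i \<Rightarrow> nat" where
  "mcox j s = (if A j s * A s j = 0 then 2 else if A j s * A s j = 1 then 3
       else if A j s * A s j = 2 then 4 else 6)"

lemma mcox_sym: "mcox j s = mcox s j"
  by (simp add: mcox_def mult.commute)

context
  fixes j s :: 'i
  assumes js: "j \<noteq> s"
begin

definition RR :: "'i \<Rightarrow> ('i \<Rightarrow> int) \<Rightarrow> int" where
  "RR i v = (\<Sum>l\<in>UNIV-{j,s}. A i l * v l)"

lemma RR_upd1[simp]: "RR i (v(j := x)) = RR i v"
  unfolding RR_def by (rule sum.cong) auto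

lemma RR_upd2[simp]: "RR i (v(s := x)) = RR i v"
  unfolding RR_def by (rule sum.cong) auto

lemma sum_split3: "(\<Sum>l\<in>UNIV. A i l * v l) = A i j * v j + A i s * v s + RR i v"
proof -
  have "(\<Sum>l\<in>UNIV. A i l * v l) = A i j * v j + (\<Sum>l\<in>UNIV-{j}. A i l * v l)"
    by (subst sum.remove[of UNIV j]) auto
  moreover have "(\<Sum>l\<in>UNIV-{j}. A i l * v l) = A i s * v s + (\<Sum>l\<in>UNIV-{j}-{s}. A i l * v l)"
    using js by (subst sum.remove[of "UNIV-{j}" s]) auto
  moreover have "UNIV-{j}-{s} = UNIV - {j,s}" by auto
  ultimately show ?thesis by (simp add: RR_def)
qed

lemma srefl_j: "srefl A j v = v(j := - v j - A j s * v s - RR j v)"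
  by (rule ext) (auto simp: srefl_def sum_split3)

lemma srefl_s: "srefl A s v = v(s := - v s - A s j * v j - RR s v)"
  using js by (intro ext) (auto simp: srefl_def sum_split3)

lemma braid: "refl_word A (altF j s (mcox j s)) = refl_word A (altF s j (mcox j s))"
proof (rule ext)
  fix v
  have "(A j s = 0 \<and> A s j = 0) \<or> (A j s = -1 \<and> A s j = -1) \<or> (A j s = -1 \<and> A s j = -2) \<or>
     (A j s = -2 \<and> A s j = -1) \<or> (A j s = -1 \<and> A s j = -3) \<or> (A j s = -3 \<and> A s j = -1)"
    using pairs[OF js] .
  then show "refl_word A (altF j s (mcox j s)) v = refl_word A (altF s j (mcox j s)) v"
    using js
    by (elim disjE; simp add: mcox_def eval_nat_numeral srefl_j srefl_s; intro ext; simp; 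
        simp add: algebra_simps)
qed

end
end


context cartan
begin

lemma simple_vec2: "j \<noteq> s \<Longrightarrow> simple j = vec2 j s 1 0"
  by (rule ext) (simp add: vec2_def simple_def)

lemma dihedral_compute:
  assumes js: "j \<noteq> s" and L: "L < mcox j s" "L \<ge> 1" and z: "(z = j \<and> z' = s) \<or> (z = s \<and> z' = j)"
    and last: "last (altF z z' L) = s"
  shows "\<exists>p q. p \<ge> 0 \<and> q \<ge> 0 \<and> refl_word A (altF z z' L) (vec2 j s 1 0) = vec2 j s p q"
proof -
  have "L < 6" using L by (auto simp: mcox_def split: if_splits)
  have "(A j s = 0 \<and> A s j = 0) \<or> (A j s = -1 \<and> A s j = -1) \<or> (A j s = -1 \<and> A s j = -2) \<or>
     (A j s = -2 \<and> A s j = -1) \<or> (A j s = -1 \<and> A s j = -3) \<or> (A j s = -3 \<and> A s j = -1)"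
    using pairs[OF js] .
  moreover have "L = 1 \<or> L = 2 \<or> L = 3 \<or> L = 4 \<or> L = 5" using \<open>L < 6\<close> L by auto
  ultimately show ?thesis using L z last js
    apply (elim disjE)
    by (auto simp: mcox_def eval_nat_numeral srefl_vec2_1 srefl_vec2_2) (intro exI conjI refl; simp)+
qed

end


context cartan
begin

definition lenI :: "'i set \<Rightarrow> (('i \<Rightarrow> int) \<Rightarrow> ('i \<Rightarrow> int)) \<Rightarrow> nat" where
  "lenI S x = (LEAST n. \<exists>w. set w \<subseteq> S \<and> length w = n \<and> refl_word A w = x)"

abbreviation len :: "(('i \<Rightarrow> int) \<Rightarrow> ('i \<Rightarrow> int)) \<Rightarrow> nat" where
  "len x \<equiv> lenI UNIV x"

lemma lenI_le: "set w \<subseteq> S \<Longrightarrow> lenI S (refl_word A w) \<le> length w"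
  unfolding lenI_def by (rule Least_le) blast

lemma lenI_ex: "set w0 \<subseteq> S \<Longrightarrow> \<exists>w. set w \<subseteq> S \<and> length w = lenI S (refl_word A w0) \<and> refl_word A w = refl_word A w0"
  unfolding lenI_def by (rule LeastI_ex) blast

lemma dihedral:
  assumes js: "j \<noteq> s" and wu: "set wu \<subseteq> {j, s}"
    and h: "lenI {j, s} (refl_word A wu) \<le> lenI {j, s} (refl_word A (wu @ [j]))"
  shows "\<exists>p q. p \<ge> 0 \<and> q \<ge> 0 \<and> refl_word A wu (simple j) = vec2 j s p q"
proof -
  let ?S = "{j, s}"
  obtain wr where wr: "set wr \<subseteq> ?S" "length wr = lenI ?S (refl_word A wu)" "refl_word A wr = refl_word A wu"
    using lenI_ex[OF wu] by blast
  obtain L where Ld: "length wr = L" by blast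
  have endj: False if w': "set w' \<subseteq> ?S" "length w' = L" "refl_word A w' = refl_word A wu" "w' \<noteq> []" "last w' = j" for w'
  proof -
    have w'eq: "w' = butlast w' @ [j]" using w' append_butlast_last_id by metis
    have "refl_word A (wu @ [j]) = refl_word A wu \<circ> srefl A j" by (simp add: refl_word_append)
    also have "\<dots> = refl_word A (butlast w' @ [j]) \<circ> srefl A j" using w'eq w' by metis
    also have "\<dots> = refl_word A (butlast w')" by (rule rw_snoc_cancel)
    finally have "lenI ?S (refl_word A (wu @ [j])) \<le> length (butlast w')"
      using lenI_le[of "butlast w'" ?S] w'(1) in_set_butlastD by fastforce
    moreover have "length w' \<ge> 1" using w'(4) by (cases w') auto
    ultimately show False using h w' wr Ld by auto
  qed
  have aok: "alt_ok wr"
  proof (rule ccontr)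
    assume "\<not> alt_ok wr"
    then obtain p z q where pzq: "wr = p @ z # z # q" using not_alt_ok by blast
    have "refl_word A (p @ q) = refl_word A wu" using wr pzq rw_cancel by metis
    moreover have "set (p @ q) \<subseteq> ?S" using wr pzq by auto
    ultimately have "lenI ?S (refl_word A wu) \<le> length (p @ q)" using lenI_le by metis
    then show False using wr pzq by auto
  qed
  show ?thesis
  proof (cases "L = 0")
    case True
    then have "refl_word A wu = id" using wr Ld by auto
    then show ?thesis using simple_vec2[OF js] by (intro exI[of _ 1] exI[of _ 0]) auto
  next
    case False
    then have wrne: "wr \<noteq> []" using Ld by auto
    obtain z z' where zz: "(z = j \<and> z' = s) \<or> (z = s \<and> z' = j)" and hz: "hd wr = z"
      using wr(1) wrne hd_in_set by (metis insert_iff singletonD subsetD)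
    have S: "?S = {z, z'}" using zz by auto
    have zne: "z \<noteq> z'" using zz js by auto
    have wralt: "wr = altF z z' L" using alt_ok_altF[OF aok _ zne wrne hz] wr(1) S Ld by auto
    define m where "m = mcox j s"
    have m2: "m \<ge> 2" by (simp add: m_def mcox_def)
    have mz: "mcox z' z = m" using zz mcox_sym by (auto simp: m_def)
    have br: "refl_word A (altF z' z m) = refl_word A (altF z z' m)"
      using braid[of z' z] zne mz by auto
    have setS: "set (altF x y k) \<subseteq> ?S" if "x \<in> ?S" "y \<in> ?S" for x y k
      using altF_set[of x y k] that by auto
    have zS: "z \<in> ?S" "z' \<in> ?S" using S by auto
    consider "L > m" | "L = m" | "L < m" by linarith
    then show ?thesis
    proof cases
      case 1
      then obtain r where r: "L = Suc m + r" using less_iff_Suc_add by auto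
      obtain rest where rest: "altF z z' (Suc m + r) = altF z z' (Suc m) @ rest" "set rest \<subseteq> {z, z'}"
        using altF_split[of z z' "Suc m" r] by blast
      obtain k where k: "m = Suc k" using m2 by (cases m) auto
      have "refl_word A (altF z z' (Suc m)) = srefl A z \<circ> refl_word A (altF z' z m)" by simp
      also have "\<dots> = srefl A z \<circ> refl_word A (altF z z' m)" using br by simp
      also have "\<dots> = refl_word A (altF z' z k)" using k by (auto simp: srefl_inv)
      finally have ch: "refl_word A (altF z z' (Suc m)) = refl_word A (altF z' z k)" .
      have "refl_word A wu = refl_word A wr" using wr(3) by simp
      also have "\<dots> = refl_word A (altF z z' (Suc m) @ rest)" using wralt r rest(1) by simp
      also have "\<dots> = refl_word A (altF z' z k) \<circ> refl_word A rest" by (simp only: refl_word_append ch)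
      also have "\<dots> = refl_word A (altF z' z k @ rest)" by (simp add: refl_word_append)
      finally have "refl_word A wu = refl_word A (altF z' z k @ rest)" .
      moreover have "set (altF z' z k @ rest) \<subseteq> ?S" using setS[OF zS(2) zS(1)] rest S by auto
      ultimately have "lenI ?S (refl_word A wu) \<le> length (altF z' z k @ rest)" using lenI_le by metis
      moreover have "length rest = r"
      proof -
        have "length (altF z z' (Suc m + r)) = length (altF z z' (Suc m) @ rest)" using rest(1) by simp
        then show ?thesis by simp
      qed
      ultimately show ?thesis using wr Ld r k by auto
    next
      case 2
      obtain k where k: "m = Suc k" using m2 by (cases m) auto
      have l1: "last (altF z z' m) = (if even k then z else z')" unfolding k by (rule altF_last)
      have l2: "last (altF z' z m) = (if even k then z' else z)" unfolding k by (rule altF_last)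
      have "last (altF z z' m) = j \<or> last (altF z' z m) = j" using l1 l2 zz by auto
      moreover have e1: "refl_word A (altF z z' m) = refl_word A wu" using wr(3) wralt 2 by simp
      moreover have e2: "refl_word A (altF z' z m) = refl_word A wu" using e1 br by simp
      moreover have "altF z z' m \<noteq> []" "altF z' z m \<noteq> []" using k by auto
      moreover have "length (altF z z' m) = L" "length (altF z' z m) = L" using 2 by auto
      ultimately show ?thesis
        using endj[of "altF z z' m"] endj[of "altF z' z m"] setS[OF zS] setS[OF zS(2) zS(1)] by blast
    next
      case 3
      have "last wr \<noteq> j" using endj[of wr] wr wrne Ld by auto
      then have ls: "last (altF z z' L) = s" using wr(1) wrne wralt last_in_set by fastforce
      obtain p q where "p \<ge> 0" "q \<ge> 0" "refl_word A (altF z z' L) (vec2 j s 1 0) = vec2 j s p q"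
        using dihedral_compute[OF js _ _ zz ls] 3 False m_def by auto
      then show ?thesis using wr wralt simple_vec2[OF js] by metis
    qed
  qed
qed

end


context cartan
begin

lemma len_comp:
  assumes "set wu \<subseteq> S"
  shows "len (refl_word A wy \<circ> refl_word A wu) \<le> len (refl_word A wy) + lenI S (refl_word A wu)"
proof -
  obtain wy' where wy': "length wy' = len (refl_word A wy)" "refl_word A wy' = refl_word A wy"
    using lenI_ex[of wy UNIV] by auto
  obtain wu' where wu': "set wu' \<subseteq> S" "length wu' = lenI S (refl_word A wu)" "refl_word A wu' = refl_word A wu"
    using lenI_ex[OF assms] by auto
  have "refl_word A wy \<circ> refl_word A wu = refl_word A (wy' @ wu')" using wy' wu' by (simp add: refl_word_append)
  then have "len (refl_word A wy \<circ> refl_word A wu) \<le> length (wy' @ wu')" using lenI_le[of "wy' @ wu'" UNIV] by simp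
  then show ?thesis using wy' wu' by simp
qed

lemma srefl_simple_self: "srefl A i (simple i) = neg (simple i)"
proof -
  have s: "(\<Sum>l\<in>UNIV. A i l * simple i l) = 2" using sum_simple[of "A i" i] by simp
  show ?thesis unfolding srefl_def neg_def s by (rule ext) (simp add: simple_def)
qed

lemma main_pos:
  assumes "len (refl_word A w) \<le> len (refl_word A (w @ [j]))"
  shows "refl_word A w (simple j) k \<ge> 0"
  using assms
proof (induction "len (refl_word A w)" arbitrary: w j k rule: less_induct)
  case less
  define x where "x = refl_word A w"
  define n where "n = len x"
  obtain w0 where w0: "length w0 = n" "refl_word A w0 = x"
    using lenI_ex[of w UNIV] by (auto simp: x_def n_def)
  show ?case
  proof (cases "n = 0")
    case True
    then have "x = id" using w0 by auto
    then show ?thesis by (simp add: x_def simple_def)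
  next
    case False
    then have w0ne: "w0 \<noteq> []" using w0 by auto
    define s' where "s' = last w0"
    define w1 where "w1 = butlast w0"
    have w0eq: "w0 = w1 @ [s']" using w0ne by (simp add: w1_def s'_def)
    have xs': "x \<circ> srefl A s' = refl_word A w1" using w0 w0eq rw_snoc_cancel by metis
    have lw1: "len (refl_word A w1) \<le> n - 1" using lenI_le[of w1 UNIV] w0 w0eq by simp
    have sj: "s' \<noteq> j"
    proof
      assume "s' = j"
      then have "refl_word A (w @ [j]) = refl_word A w1" using xs' by (simp add: x_def refl_word_append)
      then show False using less.prems lw1 False by (simp add: x_def n_def)
    qed
    let ?S = "{j, s'}"
    define P where "P = (\<lambda>(wy, wu). set wu \<subseteq> ?S \<and> refl_word A wy \<circ> refl_word A wu = x
        \<and> len (refl_word A wy) + lenI ?S (refl_word A wu) \<le> n)"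
    have P0: "P (w1, [s'])"
    proof -
      have "refl_word A w1 \<circ> refl_word A [s'] = x"
        using w0 w0eq by (simp add: refl_word_append)
      moreover have "lenI ?S (refl_word A [s']) \<le> 1" using lenI_le[of "[s']" ?S] by simp
      ultimately show ?thesis using lw1 False unfolding P_def by auto
    qed
    obtain pr where Ppr: "P pr" and minpr: "\<forall>pr'. P pr' \<longrightarrow> len (refl_word A (fst pr)) \<le> len (refl_word A (fst pr'))"
      using ex_has_least_nat[of P "(w1, [s'])" "\<lambda>pr. len (refl_word A (fst pr))"] P0 by blast
    obtain wy wu where pr: "pr = (wy, wu)" by (cases pr)
    have wuS: "set wu \<subseteq> ?S" and xeq: "refl_word A wy \<circ> refl_word A wu = x"
      and nle: "len (refl_word A wy) + lenI ?S (refl_word A wu) \<le> n"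
      using Ppr pr unfolding P_def by auto
    have lower: "n \<le> len (refl_word A wy') + lenI ?S (refl_word A wu')"
      if "set wu' \<subseteq> ?S" "refl_word A wy' \<circ> refl_word A wu' = x" for wy' wu'
      using len_comp[OF that(1), of wy'] that(2) by (simp add: n_def)
    have ylt: "len (refl_word A wy) < n"
      using minpr[rule_format, OF P0] pr lw1 False by simp
    have ystep: "len (refl_word A wy) \<le> len (refl_word A (wy @ [t]))" if tS: "t \<in> ?S" for t
    proof (rule ccontr)
      assume cn: "\<not> ?thesis"
      obtain wu'' where wu'': "set wu'' \<subseteq> ?S" "length wu'' = lenI ?S (refl_word A wu)" "refl_word A wu'' = refl_word A wu"
        using lenI_ex[OF wuS] by auto
      have "refl_word A (t # wu'') = refl_word A (t # wu)" using wu'' by simp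
      moreover have "lenI ?S (refl_word A (t # wu'')) \<le> length (t # wu'')"
        using lenI_le[of "t # wu''" ?S] wu'' tS by simp
      ultimately have l1: "lenI ?S (refl_word A (t # wu)) \<le> lenI ?S (refl_word A wu) + 1" using wu'' by simp
      have "refl_word A (wy @ [t]) \<circ> refl_word A (t # wu) = refl_word A wy \<circ> refl_word A wu"
        by (rule ext) (simp add: refl_word_append srefl_inv)
      then have "P (wy @ [t], t # wu)" unfolding P_def using xeq wuS tS l1 nle cn by auto
      then show False using minpr pr cn by fastforce
    qed
    have IHj: "refl_word A wy (simple j) k' \<ge> 0" for k'
      using less.hyps[OF _ ystep[of j]] ylt by (simp add: x_def n_def)
    have IHs: "refl_word A wy (simple s') k' \<ge> 0" for k'
      using less.hyps[OF _ ystep[of s']] ylt by (simp add: x_def n_def)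
    have dh: "lenI ?S (refl_word A wu) \<le> lenI ?S (refl_word A (wu @ [j]))"
    proof (rule ccontr)
      assume cn: "\<not> ?thesis"
      have "refl_word A (w @ [j]) = x \<circ> srefl A j" by (simp add: x_def refl_word_append)
      also have "\<dots> = refl_word A wy \<circ> refl_word A (wu @ [j])"
        using xeq[symmetric] by (simp add: refl_word_append comp_assoc)
      finally have "refl_word A (w @ [j]) = refl_word A wy \<circ> refl_word A (wu @ [j])" .
      then have "len (refl_word A (w @ [j])) \<le> len (refl_word A wy) + lenI ?S (refl_word A (wu @ [j]))"
        using len_comp[of "wu @ [j]" ?S wy] wuS by simp
      then show False using cn nle less.prems by (simp add: x_def n_def)
    qed
    obtain p q where pq: "p \<ge> 0" "q \<ge> 0" "refl_word A wu (simple j) = vec2 j s' p q"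
      using dihedral[OF sj[symmetric] wuS dh] by blast
    have "refl_word A w (simple j) = refl_word A wy (refl_word A wu (simple j))"
      using xeq x_def by (metis comp_apply)
    also have "\<dots> = (\<lambda>k. p * refl_word A wy (simple j) k + q * refl_word A wy (simple s') k)"
      using pq(3) by (simp add: vec2_def rw_lin)
    finally show ?thesis using pq IHj IHs by simp
  qed
qed

lemma root_sc:
  assumes "v \<in> roots A"
  shows "(\<forall>k. v k \<ge> 0) \<or> (\<forall>k. v k \<le> 0)"
proof -
  obtain w i where v: "v = refl_word A w (simple i)" using roots_word[OF assms] by auto
  show ?thesis
  proof (cases "len (refl_word A w) \<le> len (refl_word A (w @ [i]))")
    case True
    then show ?thesis using main_pos v by auto
  next
    case False
    have "refl_word A ((w @ [i]) @ [i]) = refl_word A w"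
      by (rule ext) (simp add: refl_word_append srefl_inv)
    then have "len (refl_word A (w @ [i])) \<le> len (refl_word A ((w @ [i]) @ [i]))" using False by simp
    then have "refl_word A (w @ [i]) (simple i) k \<ge> 0" for k by (rule main_pos)
    moreover have "refl_word A (w @ [i]) (simple i) = neg v"
      by (simp add: refl_word_append srefl_simple_self rw_neg v)
    ultimately show ?thesis by (auto simp: neg_def)
  qed
qed

end


lemma sd1: fixes g :: "'i::finite \<Rightarrow> real" and k :: 'i shows "(\<Sum>i\<in>UNIV. \<Sum>j\<in>UNIV. if i = k then g j else 0) = (\<Sum>j\<in>UNIV. g j)"
proof -
  have "(\<Sum>i\<in>UNIV. \<Sum>j\<in>UNIV. if i = k then g j else 0) = (\<Sum>i\<in>UNIV. if i = k then (\<Sum>j\<in>UNIV. g j) else 0)"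
    by (rule sum.cong) auto
  then show ?thesis by simp
qed

lemma sd2: fixes h :: "'i::finite \<Rightarrow> real" and k :: 'i shows "(\<Sum>i\<in>UNIV. \<Sum>j\<in>UNIV. if j = k then h i else 0) = (\<Sum>i\<in>UNIV. h i)"
  by (rule sum.cong) auto

lemma sd3: fixes c :: real shows "(\<Sum>i\<in>(UNIV::'i::finite set). \<Sum>j\<in>(UNIV::'i set). if i = k then (if j = k then c else 0) else 0) = c"
  using sd1[of k "\<lambda>j. if j = k then c else 0"] by simp

lemma sum4: fixes f g h w :: "'i::finite \<Rightarrow> 'i \<Rightarrow> real"
  shows "(\<Sum>i\<in>UNIV. \<Sum>j\<in>UNIV. f i j - g i j - h i j + w i j) =
    (\<Sum>i\<in>UNIV. \<Sum>j\<in>UNIV. f i j) - (\<Sum>i\<in>UNIV. \<Sum>j\<in>UNIV. g i j) - (\<Sum>i\<in>UNIV. \<Sum>j\<in>UNIV. h i j) + (\<Sum>i\<in>UNIV. \<Sum>j\<in>UNIV. w i j)"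
  by (simp add: sum.distrib sum_subtractf)

context cartan
begin

definition QQ :: "( 'i \<Rightarrow> real) \<Rightarrow> real" where
  "QQ x = (\<Sum>i\<in>UNIV. \<Sum>j\<in>UNIV. x i * dd i * of_int (A i j) * x j)"

lemma QQ_refl_step:
  fixes x :: "'i \<Rightarrow> real" and k :: 'i
  defines "C \<equiv> (\<Sum>l\<in>UNIV. of_int (A k l) * x l)"
  shows "QQ (\<lambda>j. x j - C * (if j = k then 1 else 0)) = QQ x"
proof -
  have col: "(\<Sum>i\<in>UNIV. x i * dd i * of_int (A i k)) = dd k * C"
  proof -
    have "(\<Sum>i\<in>UNIV. x i * dd i * of_int (A i k)) = (\<Sum>i\<in>UNIV. dd k * (of_int (A k i) * x i))"
      by (rule sum.cong) (auto simp: dd_sym[of _ k] algebra_simps)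
    then show ?thesis by (simp add: C_def sum_distrib_left)
  qed
  have row: "(\<Sum>j\<in>UNIV. dd k * of_int (A k j) * x j) = dd k * C"
    by (simp add: C_def sum_distrib_left algebra_simps)
  have "QQ (\<lambda>j. x j - C * (if j = k then 1 else 0)) =
     (\<Sum>i\<in>UNIV. \<Sum>j\<in>UNIV. x i * dd i * of_int (A i j) * x j
        - (if i = k then C * dd k * of_int (A k j) * x j else 0)
        - (if j = k then C * x i * dd i * of_int (A i k) else 0)
        + (if i = k then (if j = k then C * C * dd k * of_int (A k k) else 0) else 0))"
    unfolding QQ_def by (intro sum.cong refl) (auto simp: algebra_simps)
  also have "\<dots> = QQ x - C * (\<Sum>j\<in>UNIV. dd k * of_int (A k j) * x j)
       - C * (\<Sum>i\<in>UNIV. x i * dd i * of_int (A i k)) + C * C * dd k * 2"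
    unfolding sum4 sd1 sd2 sd3 by (simp add: QQ_def sum_distrib_left algebra_simps)
  also have "\<dots> = QQ x" using col row by (simp add: algebra_simps)
  finally show ?thesis .
qed

lemma QQ_srefl: "QQ (\<lambda>j. of_int (srefl A k v j)) = QQ (\<lambda>j. of_int (v j))"
proof -
  define x where "x = (\<lambda>j. real_of_int (v j))"
  have "(\<lambda>j. real_of_int (srefl A k v j)) =
      (\<lambda>j. x j - (\<Sum>l\<in>UNIV. of_int (A k l) * x l) * (if j = k then 1 else 0))"
    by (rule ext) (simp add: srefl_def x_def)
  then show ?thesis using QQ_refl_step[of x k] by (simp add: x_def)
qed

lemma QQ_simple: "QQ (\<lambda>j. of_int (simple i j)) = 2 * dd i"
proof -
  have "QQ (\<lambda>j. of_int (simple i j)) = (\<Sum>a\<in>UNIV. \<Sum>b\<in>UNIV. if a = i then (if b = i then dd i * of_int (A i i) else 0) else 0)"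
    unfolding QQ_def by (intro sum.cong refl) (auto simp: simple_def)
  also have "\<dots> = dd i * of_int (A i i)" by (rule sd3)
  finally show ?thesis by simp
qed

lemma QQ_roots: "v \<in> roots A \<Longrightarrow> \<exists>i. QQ (\<lambda>j. of_int (v j)) = 2 * dd i"
proof (induction rule: roots.induct)
  case (simple_root i)
  then show ?case using QQ_simple by blast
next
  case (refl_root v i)
  then obtain i' where "QQ (\<lambda>j. of_int (v j)) = 2 * dd i'" by blast
  then show ?case using QQ_srefl[of i v] by auto
qed

lemma QQ_scale: "QQ (\<lambda>i. c * x i) = c * c * QQ x"
  unfolding QQ_def by (simp add: sum_distrib_left algebra_simps)

lemma QQ_lower: "\<exists>lam > 0. \<forall>x i. QQ x \<ge> lam * (x i)^2"
proof -
  define F :: "real^'i \<Rightarrow> real" where "F y = QQ (\<lambda>i. y $ i)" for y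
  have cont: "continuous_on (sphere 0 1) F"
    unfolding F_def QQ_def by (intro continuous_intros)
  obtain i0 :: 'i where True by blast
  have ne: "sphere (0::real^'i) 1 \<noteq> {}" proof -
    have "axis i0 1 \<in> sphere (0::real^'i) 1" by (simp add: norm_axis_1)
    then show ?thesis by blast
  qed
  obtain y0 where y0: "y0 \<in> sphere 0 1" "\<forall>y\<in>sphere 0 1. F y0 \<le> F y"
    using continuous_attains_inf[OF compact_sphere ne cont] by blast
  have "y0 \<noteq> 0" using y0(1) by auto
  then obtain i where "y0 $ i \<noteq> 0" using \<open>y0 \<noteq> 0\<close> by (auto simp: vec_eq_iff)
  then have lpos: "F y0 > 0" unfolding F_def QQ_def by (intro dd_pd) blast
  have "QQ x \<ge> F y0 * (x i)^2" for x i
  proof (cases "\<forall>i. x i = 0")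
    case True
    then have "x = (\<lambda>i. 0 * x i)" by auto
    then have "QQ x = 0" using QQ_scale[of 0 x] by simp
    then show ?thesis using True by simp
  next
    case False
    define y :: "real^'i" where "y = (\<chi> i. x i)"
    have "y \<noteq> 0" using False by (auto simp: y_def vec_eq_iff)
    then have ny: "norm y > 0" by simp
    have "(1 / norm y) *\<^sub>R y \<in> sphere 0 1" using ny by simp
    then have "F y0 \<le> F ((1 / norm y) *\<^sub>R y)" using y0 by blast
    also have "\<dots> = (1 / norm y) * (1 / norm y) * QQ x"
    proof -
      have "(\<lambda>i. ((1 / norm y) *\<^sub>R y) $ i) = (\<lambda>i. (1 / norm y) * x i)" by (rule ext) (simp add: y_def)
      then show ?thesis unfolding F_def by (simp only: QQ_scale)
    qed
    finally have "F y0 * (norm y * norm y) \<le> QQ x" using ny by (simp add: field_simps)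
    moreover have "\<bar>x i\<bar> \<le> norm y" using component_le_norm_cart[of y i] by (simp add: y_def)
    then have "\<bar>x i\<bar> * \<bar>x i\<bar> \<le> norm y * norm y" by (intro mult_mono) auto
    then have "(x i)^2 \<le> norm y * norm y" by (simp add: power2_eq_square)
    then have "F y0 * (x i)^2 \<le> F y0 * (norm y * norm y)" using lpos by (intro mult_left_mono) auto
    ultimately show ?thesis by linarith
  qed
  then show ?thesis using lpos by blast
qed

lemma roots_finite: "finite (roots A)"
proof -
  obtain lam where lam: "lam > 0" "\<forall>x i. QQ x \<ge> lam * (x i)^2" using QQ_lower by blast
  define M where "M = (\<Sum>i\<in>UNIV. 2 * dd i)"
  define K where "K = \<lceil>M / lam\<rceil>"
  have "roots A \<subseteq> Pi UNIV (\<lambda>_. {-K..K})"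
  proof
    fix v assume v: "v \<in> roots A"
    obtain i0 where q: "QQ (\<lambda>j. of_int (v j)) = 2 * dd i0" using QQ_roots[OF v] by blast
    have "2 * dd i0 \<le> M" unfolding M_def by (rule member_le_sum) (simp_all add: dd_pos less_imp_le)
    show "v \<in> Pi UNIV (\<lambda>_. {-K..K})"
    proof
      fix i
      have "lam * (of_int (v i))^2 \<le> M" using lam(2)[rule_format, of "\<lambda>j. of_int (v j)" i] q \<open>2 * dd i0 \<le> M\<close> by linarith
      then have a: "(of_int (v i))^2 \<le> M / lam" using lam(1) by (simp add: field_simps)
      have "\<bar>v i\<bar> \<le> (v i)^2"
      proof (cases "v i = 0")
        case False
        then have "\<bar>v i\<bar> * 1 \<le> \<bar>v i\<bar> * \<bar>v i\<bar>" by (intro mult_left_mono) auto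
        then show ?thesis by (simp add: power2_eq_square abs_mult_self_eq)
      qed simp
      then have "real_of_int \<bar>v i\<bar> \<le> real_of_int ((v i)^2)" by (simp only: of_int_le_iff)
      then have "of_int \<bar>v i\<bar> \<le> M / lam" using a by simp
      then have "\<bar>v i\<bar> \<le> K" unfolding K_def by linarith
      then show "v i \<in> {-K..K}" by auto
    qed
  qed
  moreover have "finite (Pi UNIV (\<lambda>_::'i. {-K..K}))"
    using finite_PiE[of "UNIV::'i set" "\<lambda>_. {-K..K}"] by (simp add: PiE_UNIV_domain)
  ultimately show ?thesis by (rule finite_subset)
qed

end


lemma simple_inj: "simple i = simple j \<Longrightarrow> i = j"
  by (metis simple_def zero_neq_one)

lemma neg_neg[simp]: "neg (neg v) = v"
  by (simp add: neg_def)

lemma neg_inj: "neg u = neg v \<Longrightarrow> u = v"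
  by (metis neg_neg)

lemma neg_simple_ne_simple: "neg (simple i) \<noteq> simple j"
proof
  assume "neg (simple i) = simple j"
  then have "neg (simple i) j = simple j j" by simp
  then show False by (auto simp: neg_def simple_def split: if_splits)
qed

context cartan
begin

lemma root_mult:
  assumes "v \<in> roots A" "v = (\<lambda>k. c * simple j k)"
  shows "c = 1 \<or> c = -1"
proof -
  obtain w i where v: "v = refl_word A w (simple i)" using roots_word[OF assms(1)] by auto
  have "refl_word A (rev w) v = simple i" using v rw_rev_inv[of A w] by simp
  moreover have "refl_word A (rev w) v = (\<lambda>k. c * refl_word A (rev w) (simple j) k + 0 * refl_word A (rev w) (simple j) k)"
    using assms(2) rw_lin[of A "rev w" c "simple j" 0 "simple j"] by simp
  ultimately have "c * refl_word A (rev w) (simple j) i = 1"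
    by (metis (no_types, lifting) add.right_neutral mult_zero_left simple_def)
  then show ?thesis using zmult_eq_1_iff by blast
qed

lemma pos_refl:
  assumes a: "a \<in> pos_roots A" and ne: "a \<noteq> simple j"
  shows "srefl A j a \<in> pos_roots A"
proof -
  have ar: "a \<in> roots A" and anon: "\<forall>k. a k \<ge> 0" using a by (auto simp: pos_roots_def)
  have ur: "srefl A j a \<in> roots A" using ar by (rule roots.refl_root)
  show ?thesis
  proof (cases "\<forall>k. srefl A j a k \<ge> 0")
    case True
    then show ?thesis using ur by (simp add: pos_roots_def)
  next
    case False
    then have nonp: "\<forall>k. srefl A j a k \<le> 0" using root_sc[OF ur] by auto
    have "a k = 0" if "k \<noteq> j" for k
      using nonp[rule_format, of k] anon[rule_format, of k] that by (simp add: srefl_def)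
    then have aeq: "a = (\<lambda>k. a j * simple j k)" by (auto simp: simple_def)
    then have "a j = 1 \<or> a j = -1" using root_mult[OF ar] by blast
    then have "a j = 1" using anon[rule_format, of j] by auto
    then have "a = simple j" using aeq by simp
    then show ?thesis using ne by simp
  qed
qed

end


definition tX :: "('i::finite \<Rightarrow> 'i \<Rightarrow> int) \<Rightarrow> 'i set \<Rightarrow> ('i \<Rightarrow> int) \<Rightarrow> ('i \<Rightarrow> int)" where
  "tX A X v = (\<lambda>k. if k \<in> X then v k - (\<Sum>l\<in>UNIV. A k l * v l) else v k)"

lemma simple_pos: "simple i \<in> pos_roots A"
proof -
  have "simple i \<in> roots A" by (rule roots.simple_root)
  moreover have "\<forall>j. simple i j \<ge> 0" by (simp add: simple_def)
  ultimately show ?thesis by (simp add: pos_roots_def)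
qed

lemma pos_not_neg_simple: "a \<in> pos_roots A \<Longrightarrow> a \<noteq> neg (simple i)"
  by (auto simp: pos_roots_def neg_def simple_def dest!: fun_cong[of _ _ i] spec[of _ i])

context cartan
begin

context
  fixes X Y :: "'i set" and w :: "'i list"
  assumes XY: "X \<inter> Y = {}" "X \<union> Y = UNIV"
    and nadj: "\<forall>i\<in>X. \<forall>j\<in>X. i \<noteq> j \<longrightarrow> A i j = 0"
    and wd: "distinct w" and ws: "set w = X"
begin

lemma rwX: "refl_word A w = tX A X"
  using rw_set[OF wd] nadj ws by (auto simp: tX_def fun_eq_iff)

lemma rwXrev: "refl_word A (rev w) = tX A X"
  using rw_set[of "rev w" A] wd nadj ws by (auto simp: tX_def fun_eq_iff)

lemma tX_inv[simp]: "tX A X (tX A X v) = v"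
  using rw_rev_inv[of A w v] rwX rwXrev by simp

lemma tX_out: "k \<notin> X \<Longrightarrow> tX A X v k = v k"
  by (simp add: tX_def)

lemma tX_simple_in: "i \<in> X \<Longrightarrow> tX A X (simple i) = neg (simple i)"
proof (rule ext)
  fix k assume i: "i \<in> X"
  have s: "(\<Sum>l\<in>UNIV. A k l * simple i l) = A k i" by (rule sum_simple)
  show "tX A X (simple i) k = neg (simple i) k"
    using nadj i unfolding tX_def s by (auto simp: neg_def simple_def)
qed

lemma tX_neg: "tX A X (neg v) = neg (tX A X v)"
  using rw_neg[of A w v] rwX by simp

lemma tX_root: "v \<in> roots A \<Longrightarrow> tX A X v \<in> roots A"
  using rw_roots[of v A w] rwX by simp

lemma tX_pos:
  assumes a: "a \<in> pos_roots A" and ne: "\<forall>i\<in>X. a \<noteq> simple i"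
  shows "tX A X a \<in> pos_roots A"
proof -
  have "tX A X a k \<ge> 0" for k
  proof (cases "k \<in> X")
    case True
    have "srefl A k a \<in> pos_roots A" using pos_refl[OF a] ne True by blast
    then have "srefl A k a k \<ge> 0" by (simp add: pos_roots_def)
    then show ?thesis using True by (simp add: tX_def srefl_def)
  next
    case False
    then show ?thesis using a by (simp add: tX_def pos_roots_def)
  qed
  moreover have "tX A X a \<in> roots A" using a tX_root by (simp add: pos_roots_def)
  ultimately show ?thesis by (simp add: pos_roots_def)
qed

lemma tX_simple_out: "i \<in> Y \<Longrightarrow> tX A X (simple i) i = 1"
  using XY by (subst tX_out) (auto simp: simple_def)

lemma tX_simple_out_nonneg: "i \<in> Y \<Longrightarrow> tX A X (simple i) k \<ge> 0"
proof -
  assume i: "i \<in> Y"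
  have s: "(\<Sum>l\<in>UNIV. A k l * simple i l) = A k i" by (rule sum_simple)
  show ?thesis using i XY offdiag[of k i] unfolding tX_def s by (auto simp: simple_def)
qed

lemma tau_S:
  assumes "a \<in> almost_pos A"
  shows "tau_bip A Y w a \<in> almost_pos A"
proof -
  consider "a \<in> pos_roots A" | i where "a = neg (simple i)" using assms by (auto simp: almost_pos_def)
  then show ?thesis
  proof cases
    case 1
    then have nn: "\<not> (\<exists>i\<in>Y. a = neg (simple i))" using pos_not_neg_simple by blast
    show ?thesis
    proof (cases "\<exists>i\<in>X. a = simple i")
      case True
      then obtain i where "i \<in> X" "a = simple i" by blast
      then show ?thesis using nn by (auto simp: tau_bip_def rwX tX_simple_in almost_pos_def)
    next
      case False
      then show ?thesis using nn tX_pos[OF 1] by (auto simp: tau_bip_def rwX almost_pos_def)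
    qed
  next
    case 2
    show ?thesis
    proof (cases "i \<in> Y")
      case True
      then show ?thesis using 2 assms by (auto simp: tau_bip_def)
    next
      case False
      then have iX: "i \<in> X" using XY by auto
      have "\<not> (\<exists>i'\<in>Y. a = neg (simple i'))" using 2 False by (auto dest: neg_inj simple_inj)
      then have "tau_bip A Y w a = simple i" using 2 iX by (simp add: tau_bip_def rwX tX_neg tX_simple_in)
      then show ?thesis using simple_pos[of i A] by (simp add: almost_pos_def)
    qed
  qed
qed

lemma tau_inv:
  assumes "a \<in> almost_pos A"
  shows "tau_bip A Y w (tau_bip A Y w a) = a"
proof (cases "\<exists>i\<in>Y. a = neg (simple i)")
  case True
  then show ?thesis by (simp add: tau_bip_def)
next
  case False
  then have ta: "tau_bip A Y w a = tX A X a" by (simp add: tau_bip_def rwX)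
  have "\<not> (\<exists>i'\<in>Y. tX A X a = neg (simple i'))"
  proof
    assume "\<exists>i'\<in>Y. tX A X a = neg (simple i')"
    then obtain i' where i': "i' \<in> Y" "tX A X a = neg (simple i')" by blast
    then have "a = neg (tX A X (simple i'))" using tX_inv[of a] tX_neg by metis
    then have ai: "a i' = -1" using tX_simple_out[OF i'(1)] by (simp add: neg_def)
    consider "a \<in> pos_roots A" | i where "a = neg (simple i)" "i \<in> X"
      using assms False XY by (auto simp: almost_pos_def)
    then show False
    proof cases
      case 1 then show False using ai by (auto simp: pos_roots_def dest: spec[of _ i'])
    next
      case 2 then show False using ai i'(1) XY by (cases "i' = i") (auto simp: neg_def simple_def)
    qed
  qed
  then show ?thesis using ta by (simp add: tau_bip_def rwX)
qed

end
end


lemma beta_notin: "i \<notin> set u \<Longrightarrow> beta A (u @ w) i = beta A w i"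
  by (induction u) auto

lemma beta_at: "i \<notin> set u \<Longrightarrow> beta A (u @ i # v) i = refl_word A (rev v) (simple i)"
  by (induction u) auto

lemma rw_fix: "(\<forall>k\<in>set v. k \<noteq> i \<and> A k i = 0) \<Longrightarrow> refl_word A v (simple i) = simple i"
proof (induction v)
  case (Cons k v)
  have s: "(\<Sum>l\<in>UNIV. A k l * simple i l) = A k i"
  proof -
    have "(\<Sum>l\<in>UNIV. A k l * simple i l) = (\<Sum>l\<in>UNIV. if l = i then A k l else 0)"
      by (rule sum.cong) (auto simp: simple_def)
    then show ?thesis by simp
  qed
  have "refl_word A (k # v) (simple i) = srefl A k (simple i)" using Cons by simp
  also have "\<dots> = simple i" using Cons.prems unfolding srefl_def s by (auto simp: simple_def)
  finally show ?case .
qed simp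

locale bip = cartan A for A :: "'i::finite \<Rightarrow> 'i \<Rightarrow> int" +
  fixes Ipl Imi :: "'i set" and wp wm :: "'i list"
  assumes bp: "is_bipartition A Ipl Imi"
    and dp: "distinct wp" and sp: "set wp = Ipl" and dm: "distinct wm" and sm: "set wm = Imi"
begin

lemma disj: "Ipl \<inter> Imi = {}" and cover: "Ipl \<union> Imi = UNIV"
  using bp by (auto simp: is_bipartition_def)

lemma disj': "Imi \<inter> Ipl = {}" and cover': "Imi \<union> Ipl = UNIV" using disj cover by auto

lemma nadj_p: "\<forall>i\<in>Ipl. \<forall>j\<in>Ipl. i \<noteq> j \<longrightarrow> A i j = 0"
  using bp by (auto simp: is_bipartition_def dynkin_edges_def)

lemma nadj_m: "\<forall>i\<in>Imi. \<forall>j\<in>Imi. i \<noteq> j \<longrightarrow> A i j = 0"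
  using bp by (auto simp: is_bipartition_def dynkin_edges_def)

abbreviation "tp \<equiv> tX A Ipl"
abbreviation "tm \<equiv> tX A Imi"
abbreviation "taup \<equiv> tau_bip A Imi wp"
abbreviation "taum \<equiv> tau_bip A Ipl wm"

lemmas p_facts = disj cover nadj_p dp sp
lemmas m_facts = disj' cover' nadj_m dm sm

lemmas rwp = rwX[OF p_facts] and rwm = rwX[OF m_facts]
lemmas rwp_rev = rwXrev[OF p_facts] and rwm_rev = rwXrev[OF m_facts]
lemmas tp_inv = tX_inv[OF p_facts] and tm_inv = tX_inv[OF m_facts]
lemmas tp_simple_in = tX_simple_in[OF p_facts] and tm_simple_in = tX_simple_in[OF m_facts]
lemmas tp_neg = tX_neg[OF p_facts] and tm_neg = tX_neg[OF m_facts]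
lemmas tp_pos = tX_pos[OF p_facts] and tm_pos = tX_pos[OF m_facts]
lemmas tp_simple_out = tX_simple_out[OF p_facts] and tm_simple_out = tX_simple_out[OF m_facts]
lemmas tp_simple_out_nonneg = tX_simple_out_nonneg[OF p_facts] and tm_simple_out_nonneg = tX_simple_out_nonneg[OF m_facts]
lemmas taup_S = tau_S[OF p_facts] and taum_S = tau_S[OF m_facts]
lemmas taup_inv = tau_inv[OF p_facts] and taum_inv = tau_inv[OF m_facts]

declare tp_inv[simp] tm_inv[simp]

lemma tp_out: "k \<notin> Ipl \<Longrightarrow> tp v k = v k" by (simp add: tX_def)
lemma tm_out: "k \<notin> Imi \<Longrightarrow> tm v k = v k" by (simp add: tX_def)

lemma tm_inj: assumes "tm u = tm v" shows "u = v"
proof -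
  have "tm (tm u) = tm (tm v)" using assms by simp
  then show ?thesis by (simp add: tm_inv)
qed

lemma rwt: "refl_word A (wp @ wm) = tp \<circ> tm"
  by (simp add: refl_word_append rwp rwm)

lemma beta_p: "i \<in> Ipl \<Longrightarrow> beta A (wp @ wm) i = tm (simple i)"
proof -
  assume i: "i \<in> Ipl"
  then obtain u v where uv: "wp = u @ i # v" using sp split_list[of i wp] by auto
  have iu: "i \<notin> set u" "i \<notin> set v" using dp uv by auto
  have "beta A (wp @ wm) i = refl_word A (rev (v @ wm)) (simple i)" using uv beta_at[OF iu(1)] by simp
  also have "\<dots> = tm (refl_word A (rev v) (simple i))" by (simp add: refl_word_append rwm_rev)
  also have "refl_word A (rev v) (simple i) = simple i"
    using uv sp iu nadj_p i by (intro rw_fix) auto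
  finally show ?thesis .
qed

lemma beta_m: "i \<in> Imi \<Longrightarrow> beta A (wp @ wm) i = simple i"
proof -
  assume i: "i \<in> Imi"
  then have "i \<notin> set wp" using sp disj by auto
  then have b: "beta A (wp @ wm) i = beta A wm i" by (rule beta_notin)
  obtain u v where uv: "wm = u @ i # v" using sm i split_list[of i wm] by auto
  have iu: "i \<notin> set u" "i \<notin> set v" using dm uv by auto
  have "beta A wm i = refl_word A (rev v) (simple i)" using uv beta_at[OF iu(1)] by simp
  also have "\<dots> = simple i" using uv sm iu nadj_m i by (intro rw_fix) auto
  finally show ?thesis using b by simp
qed

lemma isb: "(\<exists>i. v = beta A (wp @ wm) i) \<longleftrightarrow> (\<exists>i\<in>Ipl. v = tm (simple i)) \<or> (\<exists>i\<in>Imi. v = simple i)"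
proof
  assume "\<exists>i. v = beta A (wp @ wm) i"
  then obtain i where v: "v = beta A (wp @ wm) i" by blast
  show "(\<exists>i\<in>Ipl. v = tm (simple i)) \<or> (\<exists>i\<in>Imi. v = simple i)"
  proof (cases "i \<in> Ipl")
    case True then show ?thesis using v beta_p by auto
  next
    case False then have "i \<in> Imi" using cover by auto
    then show ?thesis using v beta_m by auto
  qed
next
  assume "(\<exists>i\<in>Ipl. v = tm (simple i)) \<or> (\<exists>i\<in>Imi. v = simple i)"
  then show "\<exists>i. v = beta A (wp @ wm) i"
  proof
    assume "\<exists>i\<in>Ipl. v = tm (simple i)"
    then obtain i where "i \<in> Ipl" "v = tm (simple i)" by blast
    then show ?thesis using beta_p[of i] by (intro exI[of _ i]) simp
  next
    assume "\<exists>i\<in>Imi. v = simple i"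
    then obtain i where "i \<in> Imi" "v = simple i" by blast
    then show ?thesis using beta_m[of i] by (intro exI[of _ i]) simp
  qed
qed

lemma almost_cases:
  assumes "a \<in> almost_pos A"
  obtains "a \<in> pos_roots A" | i where "i \<in> Ipl" "a = neg (simple i)" | i where "i \<in> Imi" "a = neg (simple i)"
  using assms cover by (auto simp: almost_pos_def)

lemma pos_nonneg: "a \<in> pos_roots A \<Longrightarrow> a k \<ge> 0" by (simp add: pos_roots_def)

lemma part1:
  assumes a: "a \<in> almost_pos A"
  shows "tau_c A (wp @ wm) (tm a) = tm (taum (taup a))"
  using a
proof (cases rule: almost_cases)
  case 1
  then have nn: "\<not> (\<exists>i\<in>Imi. a = neg (simple i))" using pos_not_neg_simple by blast
  then have ta: "taup a = tp a" by (simp add: tau_bip_def rwp)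
  show ?thesis
  proof (cases "\<exists>i\<in>Ipl. tp a = neg (simple i)")
    case True
    then obtain i where i: "i \<in> Ipl" "tp a = neg (simple i)" by blast
    then have ai: "a = simple i" using tp_inv[of a] tp_neg tp_simple_in by (metis neg_neg)
    have "\<exists>i'\<in>Ipl. taup a = neg (simple i')" using ta i by auto
    then have "taum (taup a) = taup a" unfolding tau_bip_def[of A Ipl wm] by simp
    then have "taum (taup a) = neg (simple i)" using ta i by simp
    moreover have "tm a = beta A (wp @ wm) i" using beta_p[OF i(1)] ai by simp
    ultimately show ?thesis by (auto simp: tau_c_def ai tm_neg)
  next
    case False
    then have rhs: "tm (taum (taup a)) = tp a" using ta by (simp add: tau_bip_def rwm)
    have "\<not> (\<exists>j. tm a = beta A (wp @ wm) j)"
    proof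
      assume "\<exists>j. tm a = beta A (wp @ wm) j"
      then consider j where "j \<in> Ipl" "tm a = tm (simple j)" | j where "j \<in> Imi" "tm a = simple j"
        using isb by blast
      then show False
      proof cases
        case 1
        then have "a = simple j" using tm_inj by blast
        then show False using False 1 tp_simple_in by auto
      next
        case 2
        then have "a = neg (simple j)" using tm_inv[of a] tm_simple_in by metis
        then show False using pos_not_neg_simple \<open>a \<in> pos_roots A\<close> by blast
      qed
    qed
    then show ?thesis using rhs by (simp add: tau_c_def rwt)
  qed
next
  case (2 i)
  have nn: "\<not> (\<exists>i'\<in>Imi. a = neg (simple i'))" using 2 disj by (auto dest: neg_inj simple_inj)
  then have ta: "taup a = simple i" using 2 by (simp add: tau_bip_def rwp tp_neg tp_simple_in)
  have "\<not> (\<exists>i'\<in>Ipl. simple i = neg (simple i'))" using neg_simple_ne_simple by metis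
  then have rhs: "tm (taum (taup a)) = simple i" using ta by (simp add: tau_bip_def rwm)
  have x: "tm a = neg (tm (simple i))" using 2 by (simp add: tm_neg)
  have xi: "tm a i = -1" using x tm_simple_out[OF 2(1)] by (simp add: neg_def)
  have "\<not> (\<exists>j. tm a = beta A (wp @ wm) j)"
  proof
    assume "\<exists>j. tm a = beta A (wp @ wm) j"
    then consider j where "j \<in> Ipl" "tm a = tm (simple j)" | j where "j \<in> Imi" "tm a = simple j"
      using isb by blast
    then show False
    proof cases
      case 1
      then show False using xi tm_simple_out_nonneg[OF 1(1), of i] by simp
    next
      case 2
      then show False using xi by (cases "i = j") (simp_all add: simple_def)
    qed
  qed
  then have "tau_c A (wp @ wm) (tm a) = tp (tm (tm a))" by (simp add: tau_c_def rwt)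
  also have "\<dots> = simple i" using 2 by (simp add: tp_neg tp_simple_in)
  finally show ?thesis using rhs by simp
next
  case (3 i)
  then have ta: "taup a = a" by (auto simp: tau_bip_def)
  have "\<not> (\<exists>i'\<in>Ipl. a = neg (simple i'))" using 3 disj by (auto dest: neg_inj simple_inj)
  then have rhs: "tm (taum (taup a)) = neg (simple i)"
    using ta 3 by (simp add: tau_bip_def rwm tm_neg tm_simple_in)
  have "tm a = simple i" using 3 by (simp add: tm_neg tm_simple_in)
  moreover have "simple i = beta A (wp @ wm) i" using beta_m[OF 3(1)] by simp
  ultimately show ?thesis using rhs by (auto simp: tau_c_def)
qed

end


lemma funpow_in: "f ` S \<subseteq> S \<Longrightarrow> a \<in> S \<Longrightarrow> (f ^^ k) a \<in> S"
  by (induction k) auto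

lemma funpow_inj: "inj_on f S \<Longrightarrow> f ` S \<subseteq> S \<Longrightarrow> inj_on (f ^^ k) S"
proof (induction k)
  case 0 then show ?case by simp
next
  case (Suc k)
  have "inj_on (f \<circ> (f ^^ k)) S"
  proof (rule comp_inj_on)
    show "inj_on (f ^^ k) S" using Suc by simp
    have "(f ^^ k) ` S \<subseteq> S" using funpow_in[OF Suc.prems(2)] by blast
    then show "inj_on f ((f ^^ k) ` S)" using Suc.prems(1) inj_on_subset by blast
  qed
  then show ?case by (simp add: comp_def)
qed

lemma funpow_period:
  assumes "finite S" "inj_on f S" "f ` S \<subseteq> S" "a \<in> S"
  shows "\<exists>p>0. (f ^^ p) a = a"
proof -
  define g where "g k = (f ^^ k) a" for k
  have gS: "g ` {0..card S} \<subseteq> S" using funpow_in[OF assms(3,4)] by (auto simp: g_def)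
  have "\<not> inj_on g {0..card S}"
  proof
    assume "inj_on g {0..card S}"
    then have "card (g ` {0..card S}) = card {0..card S}" by (rule card_image)
    moreover have "card (g ` {0..card S}) \<le> card S" using card_mono[OF assms(1) gS] .
    ultimately show False by simp
  qed
  then obtain k1 k2 where k: "k1 \<in> {0..card S}" "k2 \<in> {0..card S}" "k1 \<noteq> k2" "g k1 = g k2"
    unfolding inj_on_def by blast
  then obtain k1 k2 where k12: "k1 < k2" "g k1 = g k2"
  proof (cases "k1 < k2")
    case True then show ?thesis using k that by blast
  next
    case False then have "k2 < k1" using k(3) by simp
    then show ?thesis using k that[of k2 k1] by simp
  qed
  define d where "d = k2 - k1"
  have "(f ^^ k1) ((f ^^ d) a) = (f ^^ k1) a"
  proof -
    have "(f ^^ k1) ((f ^^ d) a) = (f ^^ (k1 + d)) a" by (simp add: funpow_add)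
    also have "k1 + d = k2" using k12 by (simp add: d_def)
    finally show ?thesis using k12 by (simp add: g_def)
  qed
  moreover have "(f ^^ d) a \<in> S" using funpow_in[OF assms(3,4)] .
  ultimately have "(f ^^ d) a = a" using funpow_inj[OF assms(2,3), of k1] assms(4) unfolding inj_on_def by blast
  moreover have "d > 0" using k12 by (simp add: d_def)
  ultimately show ?thesis by blast
qed

lemma rw_sum:
  assumes "finite K"
  shows "refl_word A w (\<lambda>c. \<Sum>k\<in>K. f k c) = (\<lambda>c. \<Sum>k\<in>K. refl_word A w (f k) c)"
  using assms
proof (induction K rule: finite_induct)
  case empty
  then show ?case by (simp add: rw_zero)
next
  case (insert x F)
  have "refl_word A w (\<lambda>c. \<Sum>k\<in>insert x F. f k c) = refl_word A w (\<lambda>c. 1 * f x c + 1 * (\<Sum>k\<in>F. f k c))"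
    using insert by simp
  also have "\<dots> = (\<lambda>c. 1 * refl_word A w (f x) c + 1 * refl_word A w (\<lambda>c. \<Sum>k\<in>F. f k c) c)"
    by (rule rw_lin)
  finally show ?case using insert by simp
qed


context bip
begin

abbreviation "sig \<equiv> taum \<circ> taup"

lemma sig_S: "a \<in> almost_pos A \<Longrightarrow> sig a \<in> almost_pos A"
  using taup_S taum_S by simp

lemma sig_image: "sig ` almost_pos A \<subseteq> almost_pos A"
  using sig_S by blast

lemma sig_inj: "inj_on sig (almost_pos A)"
proof (rule inj_onI)
  fix a b assume ab: "a \<in> almost_pos A" "b \<in> almost_pos A" "sig a = sig b"
  then have "taum (taum (taup a)) = taum (taum (taup b))" by simp
  then have "taup a = taup b" using taum_inv taup_S ab by metis
  then have "taup (taup a) = taup (taup b)" by simp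
  then show "a = b" using taup_inv ab by metis
qed

lemma S_finite: "finite (almost_pos A)"
proof -
  have "pos_roots A \<subseteq> roots A" by (auto simp: pos_roots_def)
  then have "finite (pos_roots A)" using roots_finite finite_subset by blast
  then show ?thesis by (simp add: almost_pos_def)
qed

lemma sig_pos:
  assumes b: "b \<in> pos_roots A" and nb: "\<forall>i. sig b \<noteq> neg (simple i)"
  shows "sig b = tm (tp b)"
proof -
  have nn: "\<not> (\<exists>i\<in>Imi. b = neg (simple i))" using pos_not_neg_simple b by blast
  then have ta: "taup b = tp b" by (simp add: tau_bip_def rwp)
  show ?thesis
  proof (cases "\<exists>i\<in>Ipl. tp b = neg (simple i)")
    case True
    then have "sig b = tp b" using ta by (simp add: tau_bip_def)
    then show ?thesis using True nb by auto
  next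
    case False
    then show ?thesis using ta by (simp add: tau_bip_def rwm)
  qed
qed

lemma A_nonsing:
  assumes "\<forall>k. (\<Sum>l\<in>UNIV. A k l * z l) = 0"
  shows "z = (\<lambda>k. 0)"
proof (rule ccontr)
  assume "z \<noteq> (\<lambda>k. 0)"
  then obtain i where "z i \<noteq> 0" by auto
  define x where "x = (\<lambda>k. real_of_int (z k))"
  have "(\<exists>i. x i \<noteq> 0)" using \<open>z i \<noteq> 0\<close> by (auto simp: x_def)
  then have pos: "(\<Sum>i\<in>UNIV. \<Sum>j\<in>UNIV. x i * dd i * of_int (A i j) * x j) > 0" by (rule dd_pd)
  have "(\<Sum>i\<in>UNIV. \<Sum>j\<in>UNIV. x i * dd i * of_int (A i j) * x j) = (\<Sum>i\<in>UNIV. x i * dd i * of_int (\<Sum>j\<in>UNIV. A i j * z j))"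
    by (simp add: x_def sum_distrib_left algebra_simps)
  also have "\<dots> = 0" using assms by simp
  finally show False using pos by simp
qed

lemma orbit:
  assumes a: "a \<in> almost_pos A"
  shows "\<exists>k i. (sig ^^ k) a = neg (simple i)"
proof (rule ccontr)
  assume cn: "\<not> ?thesis"
  define u where "u = tm \<circ> tp"
  have inS: "(sig ^^ k) a \<in> almost_pos A" for k using funpow_in[OF sig_image a] .
  have posk: "(sig ^^ k) a \<in> pos_roots A" for k
    using inS[of k] cn by (auto simp: almost_pos_def)
  have uk: "(sig ^^ k) a = (u ^^ k) a" for k
  proof (induction k)
    case 0 then show ?case by simp
  next
    case (Suc k)
    have "(sig ^^ Suc k) a = sig ((sig ^^ k) a)" by simp
    also have "\<dots> = tm (tp ((sig ^^ k) a))"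
      using sig_pos[OF posk[of k]] cn by (metis funpow.simps(2) comp_apply)
    finally show ?case using Suc by (simp add: u_def)
  qed
  obtain p where p: "p > 0" "(sig ^^ p) a = a"
    using funpow_period[OF S_finite sig_inj sig_image a] by blast
  have up: "(u ^^ p) a = a" using p uk by simp
  define z where "z = (\<lambda>c. \<Sum>k<p. (u ^^ k) a c)"
  have urw: "u = refl_word A (wm @ wp)" by (simp add: u_def refl_word_append rwp rwm)
  have "u z = (\<lambda>c. \<Sum>k<p. u ((u ^^ k) a) c)"
    unfolding z_def urw by (rule rw_sum) simp
  also have "\<dots> = (\<lambda>c. \<Sum>k<p. (u ^^ Suc k) a c)" by simp
  also have "\<dots> = z"
  proof (rule ext)
    fix c
    have "(\<Sum>k<Suc p. (u ^^ k) a c) = (u ^^ 0) a c + (\<Sum>k<p. (u ^^ Suc k) a c)" by (rule sum.lessThan_Suc_shift)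
    moreover have "(\<Sum>k<Suc p. (u ^^ k) a c) = (\<Sum>k<p. (u ^^ k) a c) + (u ^^ p) a c" by simp
    ultimately show "(\<Sum>k<p. (u ^^ Suc k) a c) = z c" using up by (simp add: z_def)
  qed
  finally have uz: "tm (tp z) = z" by (simp add: u_def)
  then have "tm (tm (tp z)) = tm z" by simp
  then have eq: "tp z = tm z" by simp
  have "(\<Sum>l\<in>UNIV. A k l * z l) = 0" for k
  proof (cases "k \<in> Ipl")
    case True
    then have "k \<notin> Imi" using disj by auto
    then show ?thesis using fun_cong[OF eq, of k] True by (simp add: tX_def)
  next
    case False
    then have "k \<in> Imi" using cover by auto
    then show ?thesis using fun_cong[OF eq, of k] False by (simp add: tX_def)
  qed
  then have z0: "z = (\<lambda>k. 0)" by (intro A_nonsing) blast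
  have a0: "a \<in> pos_roots A" using posk[of 0] by simp
  then have "a \<noteq> (\<lambda>k. 0)" using roots_ne0[where A=A, OF diag_all] by (simp add: pos_roots_def)
  then obtain c where "a c \<noteq> 0" by auto
  then have ac: "a c > 0" using a0 pos_nonneg[of a c] by simp
  have "(u ^^ 0) a c \<le> z c"
    unfolding z_def
    by (rule member_le_sum) (use p posk uk pos_nonneg in auto)
  then have "z c > 0" using ac by simp
  then show False using z0 by simp
qed

end


context bip
begin

lemma tm_ap:
  assumes a: "a \<in> almost_pos A"
  shows "tm a \<in> ap_roots A (wp @ wm)"
  using a
proof (cases rule: almost_cases)
  case 1
  show ?thesis
  proof (cases "\<exists>i\<in>Imi. a = simple i")
    case True
    then obtain i where i: "i \<in> Imi" "a = simple i" by blast
    then have "tm a = neg (beta A (wp @ wm) i)" using beta_m[OF i(1)] tm_simple_in[OF i(1)] by simp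
    then show ?thesis by (simp add: ap_roots_def)
  next
    case False
    then show ?thesis using tm_pos[OF 1] by (simp add: ap_roots_def)
  qed
next
  case (2 i)
  then have "tm a = neg (beta A (wp @ wm) i)" using beta_p[OF 2(1)] by (simp add: tm_neg)
  then show ?thesis by (simp add: ap_roots_def)
next
  case (3 i)
  then have "tm a = simple i" by (simp add: tm_neg tm_simple_in)
  then show ?thesis using simple_pos[of i A] by (simp add: ap_roots_def)
qed

lemma tm_simple_p_coord:
  assumes "j \<in> Ipl" "i \<in> Imi"
  shows "tm (simple j) i = - A i j"
proof -
  have s: "(\<Sum>l\<in>UNIV. A i l * simple j l) = A i j" by (rule sum_simple)
  have "i \<noteq> j" using assms disj by auto
  then show ?thesis using assms(2) unfolding tX_def s by (simp add: simple_def)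
qed

lemma part2:
  assumes f: "is_compat_ge A Ipl Imi wp wm f" and g: "is_compat_c A (wp @ wm) g"
    and a: "a \<in> almost_pos A" and c: "c \<in> almost_pos A"
  shows "f a c = g (tm a) (tm c)"
proof -
  let ?S = "almost_pos A"
  let ?ap = "ap_roots A (wp @ wm)"
  have f1: "\<And>a c. a \<in> ?S \<Longrightarrow> c \<in> ?S \<Longrightarrow> f (taup a) (taup c) = f a c"
    and f2: "\<And>a c. a \<in> ?S \<Longrightarrow> c \<in> ?S \<Longrightarrow> f (taum a) (taum c) = f a c"
    and f3: "\<And>i c. c \<in> ?S \<Longrightarrow> f (neg (simple i)) c = max (c i) 0"
    using f unfolding is_compat_ge_def by blast+
  have g1: "\<And>x y. x \<in> ?ap \<Longrightarrow> y \<in> ?ap \<Longrightarrow> g (tau_c A (wp @ wm) x) (tau_c A (wp @ wm) y) = g x y"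
    and g2: "\<And>i x. x \<in> ?ap \<Longrightarrow> g (neg (beta A (wp @ wm) i)) x = max (x i) 0"
    using g unfolding is_compat_c_def by blast+
  define P where "P a \<longleftrightarrow> (\<forall>c\<in>?S. f a c = g (tm a) (tm c))" for a
  have propg: "P a" if aS: "a \<in> ?S" and Ps: "P (sig a)" for a
    unfolding P_def
  proof
    fix c assume cS: "c \<in> ?S"
    have "f a c = f (taup a) (taup c)" using f1 aS cS by simp
    also have "\<dots> = f (sig a) (sig c)" using f2 taup_S aS cS by simp
    also have "\<dots> = g (tm (sig a)) (tm (sig c))" using Ps sig_S[OF cS] unfolding P_def by blast
    also have "\<dots> = g (tau_c A (wp @ wm) (tm a)) (tau_c A (wp @ wm) (tm c))" using part1 aS cS by simp
    also have "\<dots> = g (tm a) (tm c)" using g1 tm_ap aS cS by blast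
    finally show "f a c = g (tm a) (tm c)" .
  qed
  have base: "P (neg (simple i))" for i
    unfolding P_def
  proof
    fix c assume cS: "c \<in> ?S"
    show "f (neg (simple i)) c = g (tm (neg (simple i))) (tm c)"
    proof (cases "i \<in> Ipl")
      case True
      then have "i \<notin> Imi" using disj by auto
      have "tm (neg (simple i)) = neg (beta A (wp @ wm) i)" using beta_p[OF True] by (simp add: tm_neg)
      then have "g (tm (neg (simple i))) (tm c) = max (tm c i) 0" using g2 tm_ap[OF cS] by simp
      also have "tm c i = c i" using \<open>i \<notin> Imi\<close> by (rule tm_out)
      finally show ?thesis using f3 cS by simp
    next
      case False
      then have iM: "i \<in> Imi" using cover by auto
      have b: "beta A (wp @ wm) i = simple i" using beta_m[OF iM] .
      have tmi: "tm (neg (simple i)) = simple i" using iM by (simp add: tm_neg tm_simple_in)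
      have bap: "simple i \<in> ?ap" using simple_pos[of i A] by (simp add: ap_roots_def)
      have "g (simple i) (tm c) = g (tau_c A (wp @ wm) (simple i)) (tau_c A (wp @ wm) (tm c))"
        using g1 bap tm_ap[OF cS] by simp
      also have "tau_c A (wp @ wm) (simple i) = neg (beta A (wp @ wm) i)"
      proof -
        have "\<exists>i'. simple i = beta A (wp @ wm) i'" using b by (intro exI[of _ i]) simp
        then show ?thesis using b by (simp add: tau_c_def)
      qed
      also have "g (neg (beta A (wp @ wm) i)) (tau_c A (wp @ wm) (tm c)) = max (tau_c A (wp @ wm) (tm c) i) 0"
        using g2 part1[OF cS] tm_ap[OF sig_S[OF cS]] by simp
      also have "max (tau_c A (wp @ wm) (tm c) i) 0 = max (c i) 0"
      proof (cases "\<exists>j. tm c = beta A (wp @ wm) j")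
        case True
        then consider j where "j \<in> Ipl" "tm c = tm (simple j)" | j where "j \<in> Imi" "tm c = simple j"
          using isb by blast
        then show ?thesis
        proof cases
          case 1
          then have cj: "c = simple j" using tm_inj by blast
          have "i \<noteq> j" using 1 iM disj by auto
          have "tau_c A (wp @ wm) (tm c) = neg (tm (simple j))" using True 1 by (simp add: tau_c_def)
          then have "tau_c A (wp @ wm) (tm c) i = A i j"
            using tm_simple_p_coord[OF 1(1) iM] by (simp add: neg_def)
          moreover have "A i j \<le> 0" using offdiag \<open>i \<noteq> j\<close> by simp
          ultimately show ?thesis using cj \<open>i \<noteq> j\<close> by (simp add: simple_def)
        next
          case 2
          then have cj: "c = neg (simple j)" using tm_inv[of c] tm_simple_in[OF 2(1)] by simp
          have "tau_c A (wp @ wm) (tm c) = neg (simple j)" using True 2 by (simp add: tau_c_def)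
          then show ?thesis using cj by (simp add: neg_def simple_def)
        qed
      next
        case False
        then have "tau_c A (wp @ wm) (tm c) = tp c" by (simp add: tau_c_def rwt)
        moreover have "i \<notin> Ipl" using iM disj by auto
        ultimately show ?thesis using tp_out[of i c] by simp
      qed
      finally show ?thesis using f3 cS tmi by simp
    qed
  qed
  have step: "\<forall>a\<in>?S. P ((sig ^^ k) a) \<longrightarrow> P a" for k
  proof (induction k)
    case 0 then show ?case by simp
  next
    case (Suc k)
    show ?case
    proof (intro ballI impI)
      fix a assume aS: "a \<in> ?S" and Pk: "P ((sig ^^ Suc k) a)"
      have "(sig ^^ Suc k) a = (sig ^^ k) (sig a)" by (simp add: funpow_Suc_right del: funpow.simps)
      then have "P (sig a)" using Suc sig_S[OF aS] Pk by metis
      then show "P a" using propg aS by blast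
    qed
  qed
  obtain k i where "(sig ^^ k) a = neg (simple i)" using orbit[OF a] by blast
  then have "P a" using step[of k] base[of i] a by metis
  then show ?thesis using c unfolding P_def by blast
qed

end

theorem proposition4p4:
  fixes A :: "'i::finite \<Rightarrow> 'i \<Rightarrow> int" and Ipl Imi :: "'i set" and wp wm :: "'i list"
  assumes "finite_type_cartan A" and "connected_diagram A" and "is_bipartition A Ipl Imi"
    and "distinct wp" and "set wp = Ipl" and "distinct wm" and "set wm = Imi"
  shows "(\<forall>a\<in>almost_pos A.
            tau_c A (wp @ wm) (refl_word A wm a) = refl_word A wm (tau_bip A Ipl wm (tau_bip A Imi wp a)))
       \<and> (\<forall>f g. is_compat_ge A Ipl Imi wp wm f \<longrightarrow> is_compat_c A (wp @ wm) g \<longrightarrow>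
            (\<forall>a\<in>almost_pos A. \<forall>c\<in>almost_pos A. f a c = g (refl_word A wm a) (refl_word A wm c)))"
proof -
  interpret b: bip A Ipl Imi wp wm
    using assms by unfold_locales simp_all
  have p1: "\<forall>a\<in>almost_pos A.
            tau_c A (wp @ wm) (refl_word A wm a) = refl_word A wm (tau_bip A Ipl wm (tau_bip A Imi wp a))"
    using b.part1 by (simp add: b.rwm)
  have p2: "\<forall>f g. is_compat_ge A Ipl Imi wp wm f \<longrightarrow> is_compat_c A (wp @ wm) g \<longrightarrow>
            (\<forall>a\<in>almost_pos A. \<forall>c\<in>almost_pos A. f a c = g (refl_word A wm a) (refl_word A wm c))"
    using b.part2 by (simp add: b.rwm)
  show ?thesis using p1 p2 by blast
qed

end
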